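(* Fix $\varepsilon\in(0,\nu_* )$ and $\xi\in\mathbb R$, let $r^\varepsilon(\cdot,\xi)\in C^1([\varepsilon,\nu_*])$ be real-valued, and let $h^\varepsilon(\cdot,\xi)\in C^2([\varepsilon,\nu_*])$ be the unique solution of $$h^\varepsilon_{\nu\nu}+k'(\nu)^2\xi^2h^\varepsilon=r^\varepsilon\ \text{ on }[\varepsilon,\nu_*],\qquad h^\varepsilon(\varepsilon,\xi)=h^\varepsilon_\nu(\varepsilon,\xi)=0.$$ Then there exists $C>0$ independent of $(\varepsilon,\xi,r^\varepsilon)$ such that, for $\nu\in[\varepsilon,\nu_*]$ and $\xi\neq0$, $$h^\varepsilon_\nu(\nu,\xi)^2+k'(\nu)^2\xi^2h^\varepsilon(\nu,\xi)^2\le C\sum_{j=1}^3I_j^\varepsilon(\nu,\xi),$$ where $I_1^\varepsilon=k'(\nu)^{-2}\xi^{-2}r^\varepsilon(\nu,\xi)^2$, $I_2^\varepsilon=\xi^{-2}\int_\varepsilon^\nu k'(\tau)^{-2}r^\varepsilon(\tau,\xi)^2d\tau$, $I_3^\varepsilon=\xi^{-2}\int_\varepsilon^\nu\frac{r^\varepsilon_\nu(\tau,\xi)^2}{|k'(\tau)k''(\tau)|+k'(\tau)^2}d\tau$. In addition, for every $\xi\in\mathbb R$ and $\nu\in[\varepsilon,\nu_*]$, $$h^\varepsilon_\nu(\nu,\xi)^2+k'(\nu)^2\xi^2h^\varepsilon(\nu,\xi)^2\le C\,\nu\int_\varepsilon^\nu r^\varepsilon(\tau,\xi)^2d\tau,$$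 with $C>0$ independent of $(\varepsilon,\xi,r^\varepsilon)$.
   Context: Standing setting ($\gamma=3$): $\varrho(\nu)$ is the inverse of $\nu(\varrho)=\int_0^\varrho\frac{\tau^2}{1-\tau^2}d\tau$, $\nu_{\rm cr}=\nu(1/\sqrt2)$, and $k$ is defined on $[0,\nu_{\rm cr}]$ by $k(0)=0$, $k'(\nu)=\sqrt{1-2\varrho(\nu)^2}/\varrho(\nu)^2$. In particular $k'>0$ and $k''<0$ on $(0,\nu_{\rm cr})$. $\nu_*\in(0,\nu_{\rm cr})$ is fixed. *)

theory Defs
  imports "HOL-Analysis.Analysis"
begin

text \<open>gamma = 3 setting. nu(rho) = int_0^rho tau^2/(1-tau^2) dtau.\<close>
definition nu_of :: "real \<Rightarrow> real" where
  "nu_of \<rho> = integral {0..\<rho>} (\<lambda>\<tau>. \<tau>\<^sup>2 / (1 - \<tau>\<^sup>2))"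

definition nu_cr :: real where
  "nu_cr = nu_of (1 / sqrt 2)"

definition varrho :: "real \<Rightarrow> real" where
  "varrho \<nu> = (THE \<rho>. \<rho> \<in> {0..1 / sqrt 2} \<and> nu_of \<rho> = \<nu>)"

definition kp :: "real \<Rightarrow> real" where
  "kp \<nu> = sqrt (1 - 2 * (varrho \<nu>)\<^sup>2) / (varrho \<nu>)\<^sup>2"

definition kpp :: "real \<Rightarrow> real" where
  "kpp \<nu> = deriv kp \<nu>"

end

theory Submission
  imports Defs
begin


definition f0 :: "real \<Rightarrow> real" where "f0 \<tau> = \<tau>\<^sup>2 / (1 - \<tau>\<^sup>2)"

lemma f0_cont: "continuous_on {0..9/10} f0"
  unfolding f0_def
proof (intro continuous_intros ballI)
  fix \<tau> :: real assume "\<tau> \<in> {0..9/10}"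
  then have "\<tau> * \<tau> \<le> 9/10 * (9/10)" by (intro mult_mono) auto
  then show "1 - \<tau>\<^sup>2 \<noteq> 0" by (simp add: power2_eq_square)
qed

lemma nu_of_eq: "nu_of = (\<lambda>u. integral {0..u} f0)"
  by (auto simp: nu_of_def f0_def[abs_def])

lemma nu_vd: "x \<in> {0..9/10} \<Longrightarrow> (nu_of has_vector_derivative f0 x) (at x within {0..9/10})"
  unfolding nu_of_eq by (rule integral_has_vector_derivative[OF f0_cont])

lemma nu_cont: "continuous_on {0..9/10} nu_of"
  using nu_vd continuous_on_eq_continuous_within has_vector_derivative_continuous by blast

lemma nu_der: "0 < x \<Longrightarrow> x < 9/10 \<Longrightarrow> (nu_of has_real_derivative f0 x) (at x)"
proof -
  assume a: "0 < x" "x < 9/10"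
  have "(nu_of has_vector_derivative f0 x) (at x within {0..9/10})" using a by (intro nu_vd) auto
  moreover have "x \<in> interior {0..9/10::real}" using a by auto
  ultimately have "(nu_of has_vector_derivative f0 x) (at x)" using at_within_interior by metis
  then show ?thesis by (simp add: has_real_derivative_iff_has_vector_derivative)
qed

lemma nu0: "nu_of 0 = 0" by (simp add: nu_of_def)

lemma f0_pos: "0 < x \<Longrightarrow> x < 9/10 \<Longrightarrow> 0 < f0 x"
proof -
  assume a: "0 < x" "x < 9/10"
  then have "x * x \<le> 9/10 * (9/10)" by (intro mult_mono) auto
  then show ?thesis using a by (simp add: f0_def power2_eq_square)
qed

lemma nu_strict: "0 \<le> a \<Longrightarrow> a < b \<Longrightarrow> b \<le> 9/10 \<Longrightarrow> nu_of a < nu_of b"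
proof -
  assume ab: "0 \<le> a" "a < b" "b \<le> 9/10"
  show ?thesis
  proof (rule DERIV_pos_imp_increasing_open[where f = nu_of])
    show "a < b" by fact
    fix x assume x: "a < x" "x < b"
    then have x2: "0 < x" "x < 9/10" using ab by auto
    show "\<exists>y. DERIV nu_of x :> y \<and> 0 < y"
      by (intro exI[of _ "f0 x"] conjI nu_der f0_pos x2)
  next
    show "continuous_on {a..b} nu_of" by (rule continuous_on_subset[OF nu_cont]) (use ab in auto)
  qed
qed

abbreviation s0 :: real where "s0 \<equiv> 1 / sqrt 2"

lemma s0_bounds: "0 < s0" "s0 < 9/10" "s0\<^sup>2 = 1/2"
proof -
  show "0 < s0" by simp
  have "(10/9)\<^sup>2 < (sqrt 2)\<^sup>2" by (simp add: power2_eq_square)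
  then have "10/9 < sqrt 2" by (smt (verit) power_mono real_sqrt_ge_zero)
  then show "s0 < 9/10" by (simp add: divide_simps)
  show "s0\<^sup>2 = 1/2" by (simp add: power_divide)
qed

lemma nu_inj: "a \<in> {0..s0} \<Longrightarrow> b \<in> {0..s0} \<Longrightarrow> nu_of a = nu_of b \<Longrightarrow> a = b"
proof (rule ccontr)
  assume a: "a \<in> {0..s0}" "b \<in> {0..s0}" "nu_of a = nu_of b" "a \<noteq> b"
  have s: "s0 < 9/10" by (rule s0_bounds)
  show False
  proof (cases "a < b")
    case True
    then have "nu_of a < nu_of b" using a s by (intro nu_strict) auto
    then show False using a by simp
  next
    case False
    then have "b < a" using a by auto
    then have "nu_of b < nu_of a" using a s by (intro nu_strict) auto
    then show False using a by simp
  qed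
qed

lemma varrho_props: "0 \<le> \<nu> \<Longrightarrow> \<nu> \<le> nu_cr \<Longrightarrow> varrho \<nu> \<in> {0..s0} \<and> nu_of (varrho \<nu>) = \<nu>"
proof -
  assume a: "0 \<le> \<nu>" "\<nu> \<le> nu_cr"
  have "continuous_on {0..s0} nu_of" by (rule continuous_on_subset[OF nu_cont]) (use s0_bounds in auto)
  then obtain \<rho> where r: "0 \<le> \<rho>" "\<rho> \<le> s0" "nu_of \<rho> = \<nu>"
    using IVT'[of nu_of 0 \<nu> s0] a nu0 s0_bounds by (auto simp: nu_cr_def)
  have "varrho \<nu> = \<rho>" unfolding varrho_def
    by (rule the_equality) (use r nu_inj in auto)
  then show ?thesis using r by auto
qed

lemma varrho_nu: "\<rho> \<in> {0..s0} \<Longrightarrow> varrho (nu_of \<rho>) = \<rho>"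
  unfolding varrho_def by (rule the_equality) (use nu_inj in auto)

lemma nucr_eq: "nu_of s0 = nu_cr" by (simp add: nu_cr_def)

lemma varrho_bounds: "0 < \<nu> \<Longrightarrow> \<nu> < nu_cr \<Longrightarrow> 0 < varrho \<nu> \<and> varrho \<nu> < s0"
proof -
  assume a: "0 < \<nu>" "\<nu> < nu_cr"
  have v: "0 \<le> varrho \<nu>" "varrho \<nu> \<le> s0" "nu_of (varrho \<nu>) = \<nu>" using varrho_props[of \<nu>] a by auto
  have "varrho \<nu> \<noteq> 0" using v(3) nu0 a by auto
  moreover have "varrho \<nu> \<noteq> s0" using v(3) nucr_eq a by auto
  ultimately show ?thesis using v by linarith
qed

lemma varrho_cont: "0 < \<nu> \<Longrightarrow> \<nu> < nu_cr \<Longrightarrow> isCont varrho \<nu>"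
proof -
  assume a: "0 < \<nu>" "\<nu> < nu_cr"
  define \<rho> where "\<rho> = varrho \<nu>"
  have b: "0 < \<rho>" "\<rho> < s0" using varrho_bounds[OF a] by (auto simp: \<rho>_def)
  define d where "d = min \<rho> (s0 - \<rho>) / 2"
  have d: "0 < d" using b by (simp add: d_def)
  have "isCont varrho (nu_of \<rho>)"
  proof (rule isCont_inverse_function[where f=nu_of and g=varrho and x=\<rho>, OF d])
    fix z assume "\<bar>z - \<rho>\<bar> \<le> d"
    then have z: "0 < z" "z < s0" using b by (auto simp: d_def abs_if split: if_splits)
    show "varrho (nu_of z) = z" using z by (intro varrho_nu) auto
    show "isCont nu_of z" using z s0_bounds(2) by (intro DERIV_isCont[OF nu_der]) auto
  qed
  then show ?thesis using varrho_props[of \<nu>] a by (simp add: \<rho>_def)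
qed

lemma varrho_der: "0 < \<nu> \<Longrightarrow> \<nu> < nu_cr \<Longrightarrow> DERIV varrho \<nu> :> inverse (f0 (varrho \<nu>))"
proof -
  assume a: "0 < \<nu>" "\<nu> < nu_cr"
  have b: "0 < varrho \<nu>" "varrho \<nu> < s0" using varrho_bounds[OF a] by auto
  show ?thesis
  proof (rule DERIV_inverse_function[where f = nu_of and a = 0 and b = nu_cr])
    show "DERIV nu_of (varrho \<nu>) :> f0 (varrho \<nu>)" using b s0_bounds by (intro nu_der) auto
    show "f0 (varrho \<nu>) \<noteq> 0" using b s0_bounds f0_pos[of "varrho \<nu>"] by auto
    show "0 < \<nu>" "\<nu> < nu_cr" by fact+
    show "\<And>y. 0 < y \<Longrightarrow> y < nu_cr \<Longrightarrow> nu_of (varrho y) = y" using varrho_props by auto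
    show "isCont varrho \<nu>" using varrho_cont a by auto
  qed
qed

definition g1 :: "real \<Rightarrow> real" where "g1 \<rho> = sqrt (1 - 2 * \<rho>\<^sup>2) / \<rho>\<^sup>2"
definition g1d :: "real \<Rightarrow> real" where
  "g1d \<rho> = ((-2*\<rho> / sqrt (1 - 2*\<rho>\<^sup>2)) * \<rho>\<^sup>2 - sqrt (1 - 2*\<rho>\<^sup>2) * (2*\<rho>)) / (\<rho>\<^sup>2)\<^sup>2"

lemma g1_der: "0 < \<rho> \<Longrightarrow> \<rho> < s0 \<Longrightarrow> DERIV g1 \<rho> :> g1d \<rho>"
proof -
  assume a: "0 < \<rho>" "\<rho> < s0"
  have "\<rho>\<^sup>2 < s0\<^sup>2" using a by (intro power_strict_mono) auto
  then have p: "0 < 1 - 2*\<rho>\<^sup>2" using s0_bounds by auto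
  have d1: "((\<lambda>x. sqrt (1 - 2*x\<^sup>2)) has_real_derivative (-2*\<rho> / sqrt (1 - 2*\<rho>\<^sup>2))) (at \<rho>)"
    using p by (auto intro!: derivative_eq_intros simp: field_simps)
  have d2: "((\<lambda>x. x\<^sup>2) has_real_derivative 2*\<rho>) (at \<rho>)"
    by (auto intro!: derivative_eq_intros)
  show ?thesis unfolding g1_def[abs_def] g1d_def
    using DERIV_divide[OF d1 d2] a by simp
qed


definition kd :: "real \<Rightarrow> real" where "kd \<nu> = g1d (varrho \<nu>) * inverse (f0 (varrho \<nu>))"

lemma kp_der: "0 < \<nu> \<Longrightarrow> \<nu> < nu_cr \<Longrightarrow> DERIV kp \<nu> :> kd \<nu>"
proof -
  assume a: "0 < \<nu>" "\<nu> < nu_cr"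
  have e: "kp = (\<lambda>\<nu>. g1 (varrho \<nu>))" by (rule ext) (simp add: kp_def g1_def)
  have b: "0 < varrho \<nu>" "varrho \<nu> < s0" using varrho_bounds[OF a] by auto
  show ?thesis unfolding e kd_def by (rule DERIV_chain2[OF g1_der[OF b] varrho_der[OF a]])
qed

lemma kpp_eq: "0 < \<nu> \<Longrightarrow> \<nu> < nu_cr \<Longrightarrow> kpp \<nu> = kd \<nu>"
  unfolding kpp_def by (rule DERIV_imp_deriv[OF kp_der])

lemma sq_pos: "0 < \<rho> \<Longrightarrow> \<rho> < s0 \<Longrightarrow> 0 < 1 - 2 * \<rho>\<^sup>2"
proof -
  assume a: "0 < \<rho>" "\<rho> < s0"
  have "\<rho>\<^sup>2 < s0\<^sup>2" using a by (intro power_strict_mono) auto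
  then show ?thesis using s0_bounds by auto
qed

lemma kd_neg: "0 < \<nu> \<Longrightarrow> \<nu> < nu_cr \<Longrightarrow> kd \<nu> \<le> 0"
proof -
  assume a: "0 < \<nu>" "\<nu> < nu_cr"
  define \<rho> where "\<rho> = varrho \<nu>"
  have b: "0 < \<rho>" "\<rho> < s0" using varrho_bounds[OF a] by (auto simp: \<rho>_def)
  have p: "0 < sqrt (1 - 2 * \<rho>\<^sup>2)" using sq_pos[OF b] by simp
  have "(-2*\<rho> / sqrt (1 - 2*\<rho>\<^sup>2)) * \<rho>\<^sup>2 \<le> 0" using b p
    by (intro mult_nonpos_nonneg) (auto simp: divide_nonpos_pos)
  moreover have "0 < sqrt (1 - 2*\<rho>\<^sup>2) * (2*\<rho>)" using p b by simp
  ultimately have "(-2*\<rho> / sqrt (1 - 2*\<rho>\<^sup>2)) * \<rho>\<^sup>2 - sqrt (1 - 2*\<rho>\<^sup>2) * (2*\<rho>) \<le> 0" by linarith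
  then have "g1d \<rho> \<le> 0" unfolding g1d_def by (rule divide_nonpos_nonneg) simp
  moreover have "0 < inverse (f0 \<rho>)" using f0_pos[of \<rho>] b s0_bounds by auto
  ultimately show ?thesis unfolding kd_def \<rho>_def[symmetric] by (simp add: mult_nonpos_nonneg)
qed

lemma kp_pos: "0 < \<nu> \<Longrightarrow> \<nu> < nu_cr \<Longrightarrow> 0 < kp \<nu>"
proof -
  assume a: "0 < \<nu>" "\<nu> < nu_cr"
  have b: "0 < varrho \<nu>" "varrho \<nu> < s0" using varrho_bounds[OF a] by auto
  show ?thesis unfolding kp_def using sq_pos[OF b] b by simp
qed

lemma kd_cont: "0 < \<nu> \<Longrightarrow> \<nu> < nu_cr \<Longrightarrow> isCont kd \<nu>"
proof -
  assume a: "0 < \<nu>" "\<nu> < nu_cr"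
  define \<rho> where "\<rho> = varrho \<nu>"
  have b: "0 < \<rho>" "\<rho> < s0" using varrho_bounds[OF a] by (auto simp: \<rho>_def)
  have p: "0 < sqrt (1 - 2 * \<rho>\<^sup>2)" using sq_pos[OF b] by simp
  have c1: "isCont g1d \<rho>" unfolding g1d_def[abs_def] using p b
    by (intro continuous_intros) auto
  have fp: "0 < f0 \<rho>" using f0_pos[of \<rho>] b s0_bounds by auto
  have "\<rho> * \<rho> \<le> 9/10 * (9/10)" using b s0_bounds by (intro mult_mono) auto
  then have "1 - \<rho>\<^sup>2 \<noteq> 0" by (simp add: power2_eq_square)
  then have c2: "isCont (\<lambda>x. inverse (f0 x)) \<rho>" unfolding f0_def[abs_def] using fp
    by (intro continuous_intros) (auto simp: f0_def)
  show ?thesis unfolding kd_def[abs_def]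
    by (rule isCont_mult[OF isCont_o2[OF varrho_cont[OF a] c1[unfolded \<rho>_def]] isCont_o2[OF varrho_cont[OF a] c2[unfolded \<rho>_def]]])
qed


lemma gronwall:
  fixes J e G g :: "real \<Rightarrow> real" and a b c :: real
  assumes ab: "a \<le> b" and c: "0 \<le> c"
    and Jd: "\<And>s. s \<in> {a..b} \<Longrightarrow> (J has_real_derivative e s) (at s within {a..b})"
    and J0: "J a = 0"
    and Gd: "\<And>s. s \<in> {a..b} \<Longrightarrow> (G has_real_derivative g s) (at s within {a..b})"
    and G0: "G a = 0"
    and gpos: "\<And>s. s \<in> {a..b} \<Longrightarrow> 0 \<le> g s"
    and ineq: "\<And>s. s \<in> {a..b} \<Longrightarrow> e s \<le> g s + c * J s"
  shows "J b \<le> exp (c * (b - a)) * G b"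
proof -
  define P where "P s = exp (- c * (s - a)) * J s - G s" for s
  define P' where "P' s = exp (- c * (s - a)) * (- c) * J s + exp (- c * (s - a)) * e s - g s" for s
  have Pd: "(P has_vector_derivative P' s) (at s within {a..b})" if "s \<in> {a..b}" for s
    unfolding has_real_derivative_iff_has_vector_derivative[symmetric] P_def[abs_def] P'_def
    using Jd[OF that] Gd[OF that]
    by (auto intro!: derivative_eq_intros simp: algebra_simps)
  have int: "(P' has_integral (P b - P a)) {a..b}"
    by (rule fundamental_theorem_of_calculus[OF ab Pd])
  have le: "P' s \<le> 0" if s: "s \<in> {a..b}" for s
  proof -
    have x1: "exp (- c * (s - a)) \<le> 1" using c s by (simp add: mult_nonneg_nonneg)
    have "P' s = exp (- c * (s - a)) * (e s - c * J s) - g s" by (simp add: P'_def algebra_simps)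
    also have "\<dots> \<le> exp (- c * (s - a)) * g s - g s"
      using ineq[OF s] by (intro diff_right_mono mult_left_mono) auto
    also have "\<dots> \<le> 0" using x1 gpos[OF s] by (simp add: mult_le_cancel_right1 mult_left_le_one_le)
    finally show ?thesis .
  qed
  have "P b - P a \<le> 0" using has_integral_le[OF int has_integral_0] le by auto
  then have "exp (- c * (b - a)) * J b \<le> G b" by (simp add: P_def J0 G0)
  then have "exp (c * (b - a)) * (exp (- c * (b - a)) * J b) \<le> exp (c * (b - a)) * G b"
    by (intro mult_left_mono) auto
  then show ?thesis by (simp add: mult.assoc[symmetric] exp_add[symmetric])
qed



lemma main_est:
  fixes a b \<xi> \<nu> :: real and K K' r r' h h' h'' :: "real \<Rightarrow> real"
  assumes a0: "0 < a" and ab: "a \<le> b"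
    and Kd: "\<And>t. t \<in> {a..b} \<Longrightarrow> (K has_real_derivative K' t) (at t within {a..b})"
    and Kpos: "\<And>t. t \<in> {a..b} \<Longrightarrow> 0 < K t"
    and K'neg: "\<And>t. t \<in> {a..b} \<Longrightarrow> K' t \<le> 0"
    and K'c: "continuous_on {a..b} K'"
    and rd: "\<And>t. t \<in> {a..b} \<Longrightarrow> (r has_real_derivative r' t) (at t within {a..b})"
    and r'c: "continuous_on {a..b} r'"
    and hd: "\<And>t. t \<in> {a..b} \<Longrightarrow> (h has_real_derivative h' t) (at t within {a..b})"
    and h'd: "\<And>t. t \<in> {a..b} \<Longrightarrow> (h' has_real_derivative h'' t) (at t within {a..b})"
    and ode: "\<And>t. t \<in> {a..b} \<Longrightarrow> h'' t + (K t)\<^sup>2 * \<xi>\<^sup>2 * h t = r t"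
    and h0: "h a = 0" and h'0: "h' a = 0"
    and nu: "\<nu> \<in> {a..b}" and CC: "exp 1 + 1 \<le> C"
  shows "(h' \<nu>)\<^sup>2 + (K \<nu>)\<^sup>2 * \<xi>\<^sup>2 * (h \<nu>)\<^sup>2
           \<le> C * \<nu> * integral {a..\<nu>} (\<lambda>\<tau>. (r \<tau>)\<^sup>2)"
proof -
  define S where "S = {a..b}"
  have hc: "continuous_on S h" unfolding S_def using hd by (rule DERIV_continuous_on)
  have h'c: "continuous_on S h'" unfolding S_def using h'd by (rule DERIV_continuous_on)
  have rc: "continuous_on S r" unfolding S_def using rd by (rule DERIV_continuous_on)
  have Kc: "continuous_on S K" unfolding S_def using Kd by (rule DERIV_continuous_on)
  define E where "E t = (h' t)\<^sup>2 + (K t)\<^sup>2 * \<xi>\<^sup>2 * (h t)\<^sup>2" for t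
  define E' where "E' t = 2 * h' t * r t + 2 * K t * K' t * \<xi>\<^sup>2 * (h t)\<^sup>2" for t
  have Ec: "continuous_on S E" unfolding E_def[abs_def] using hc h'c Kc by (intro continuous_intros)
  have Ed: "(E has_real_derivative E' t) (at t within S)" if t: "t \<in> S" for t
  proof -
    have o: "h'' t = r t - (K t)\<^sup>2 * \<xi>\<^sup>2 * h t" using ode[of t] t by (simp add: S_def algebra_simps)
    show ?thesis unfolding E_def[abs_def] E'_def
      using hd[of t] h'd[of t] Kd[of t] t unfolding S_def
      by (auto intro!: derivative_eq_intros simp: o power2_eq_square algebra_simps)
  qed
  have Ea: "E a = 0" by (simp add: E_def h0 h'0)
  have nuS: "{a..\<nu>} \<subseteq> S" using nu by (auto simp: S_def)
  have nupos: "0 < \<nu>" using nu a0 by auto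
  define R where "R = integral {a..\<nu>} (\<lambda>\<tau>. (r \<tau>)\<^sup>2)"
  have r2c: "continuous_on S (\<lambda>\<tau>. (r \<tau>)\<^sup>2)" using rc by (intro continuous_intros)
  have r2i: "(\<lambda>\<tau>. (r \<tau>)\<^sup>2) integrable_on {a..s}" if "s \<in> {a..\<nu>}" for s
    using that nuS by (intro integrable_continuous_real continuous_on_subset[OF r2c]) auto
  have Ei: "E integrable_on {a..s}" if "s \<in> {a..\<nu>}" for s
    using that nuS by (intro integrable_continuous_real continuous_on_subset[OF Ec]) auto
  have R0: "0 \<le> R" unfolding R_def using r2i[of \<nu>] nu by (intro integral_nonneg) auto
  define J where "J s = integral {a..s} E" for s
  have Jd: "(J has_real_derivative E s) (at s within {a..\<nu>})" if "s \<in> {a..\<nu>}" for s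
    unfolding J_def[abs_def] has_real_derivative_iff_has_vector_derivative
    using that by (intro integral_has_vector_derivative continuous_on_subset[OF Ec nuS])
  have Ebound: "E s \<le> J s / \<nu> + \<nu> * R" if s: "s \<in> {a..\<nu>}" for s
  proof -
    have sS: "{a..s} \<subseteq> S" using s nuS by auto
    have dd: "(E has_vector_derivative E' x) (at x within {a..s})" if "x \<in> {a..s}" for x
      using DERIV_subset[OF Ed sS] that sS unfolding has_real_derivative_iff_has_vector_derivative by blast
    have "(E' has_integral (E s - E a)) {a..s}"
      using s by (intro fundamental_theorem_of_calculus dd) auto
    then have i1: "(E' has_integral E s) {a..s}" by (simp add: Ea)
    have pw: "E' t \<le> E t / \<nu> + \<nu> * (r t)\<^sup>2" if t: "t \<in> {a..s}" for t
    proof -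
      have tS: "t \<in> S" using t sS by auto
      have "K t * K' t \<le> 0" using Kpos[of t] K'neg[of t] tS by (auto simp: S_def mult_nonneg_nonpos less_imp_le)
      then have "(K t * K' t) * (2 * \<xi>\<^sup>2 * (h t)\<^sup>2) \<le> 0"
        by (rule mult_nonpos_nonneg) auto
      moreover have "2 * K t * K' t * \<xi>\<^sup>2 * (h t)\<^sup>2 = (K t * K' t) * (2 * \<xi>\<^sup>2 * (h t)\<^sup>2)"
        by (simp add: algebra_simps)
      ultimately have "2 * K t * K' t * \<xi>\<^sup>2 * (h t)\<^sup>2 \<le> 0" by simp
      moreover have "2 * h' t * r t \<le> (h' t)\<^sup>2 / \<nu> + \<nu> * (r t)\<^sup>2"
      proof -
        have "0 \<le> (h' t - \<nu> * r t)\<^sup>2 / \<nu>" using nupos by simp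
        also have "(h' t - \<nu> * r t)\<^sup>2 / \<nu> = (h' t)\<^sup>2 / \<nu> + \<nu> * (r t)\<^sup>2 - 2 * h' t * r t"
          using nupos by (simp add: field_simps power2_eq_square)
        finally show ?thesis by simp
      qed
      moreover have "(h' t)\<^sup>2 / \<nu> \<le> E t / \<nu>" using nupos
        by (intro divide_right_mono) (auto simp: E_def)
      ultimately show ?thesis unfolding E'_def by linarith
    qed
    have i2: "((\<lambda>t. E t / \<nu> + \<nu> * (r t)\<^sup>2) has_integral (J s / \<nu> + \<nu> * integral {a..s} (\<lambda>\<tau>. (r \<tau>)\<^sup>2))) {a..s}"
      unfolding J_def using Ei[OF s] r2i[OF s]
      by (intro has_integral_add has_integral_divide has_integral_mult_right integrable_integral)
    have "E s \<le> J s / \<nu> + \<nu> * integral {a..s} (\<lambda>\<tau>. (r \<tau>)\<^sup>2)"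
      using has_integral_le[OF i1 i2 pw] .
    also have "integral {a..s} (\<lambda>\<tau>. (r \<tau>)\<^sup>2) \<le> R" unfolding R_def
      using s r2i[OF s] r2i[of \<nu>] nu by (intro integral_subset_le) auto
    finally show ?thesis using nupos by simp
  qed
  have gw: "J \<nu> \<le> exp ((1/\<nu>) * (\<nu> - a)) * (\<nu> * R * (\<nu> - a))"
  proof (rule gronwall[where e = E and g = "\<lambda>_. \<nu> * R" and G = "\<lambda>s. \<nu> * R * (s - a)" and J = J])
    show "a \<le> \<nu>" "0 \<le> 1/\<nu>" using nu nupos by auto
    show "\<And>s. s \<in> {a..\<nu>} \<Longrightarrow> (J has_real_derivative E s) (at s within {a..\<nu>})" by (rule Jd)
    show "J a = 0" by (simp add: J_def)
    show "\<And>s. s \<in> {a..\<nu>} \<Longrightarrow> ((\<lambda>s. \<nu> * R * (s - a)) has_real_derivative \<nu> * R) (at s within {a..\<nu>})"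
      by (auto intro!: derivative_eq_intros)
    show "\<nu> * R * (a - a) = 0" by simp
    show "\<And>s. s \<in> {a..\<nu>} \<Longrightarrow> 0 \<le> \<nu> * R" using nupos R0 by simp
    show "\<And>s. s \<in> {a..\<nu>} \<Longrightarrow> E s \<le> \<nu> * R + 1 / \<nu> * J s" using Ebound by (simp add: algebra_simps)
  qed
  have "exp ((1/\<nu>) * (\<nu> - a)) \<le> exp 1" using nupos a0 by (simp add: field_simps)
  moreover have "\<nu> * R * (\<nu> - a) \<le> \<nu> * R * \<nu>" using nupos R0 a0 by (intro mult_left_mono) auto
  moreover have "0 \<le> \<nu> * R * (\<nu> - a)" using nupos R0 nu by auto
  ultimately have "J \<nu> \<le> exp 1 * (\<nu> * R * \<nu>)" using gw
    by (smt (verit) mult_mono exp_gt_zero)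
  then have "J \<nu> / \<nu> \<le> exp 1 * \<nu> * R" using nupos by (simp add: field_simps)
  then have "E \<nu> \<le> exp 1 * \<nu> * R + \<nu> * R" using Ebound[of \<nu>] nu by auto
  also have "\<dots> = (exp 1 + 1) * (\<nu> * R)" by (simp add: algebra_simps)
  also have "\<dots> \<le> C * (\<nu> * R)" using CC nupos R0 by (intro mult_right_mono) auto
  finally show ?thesis by (simp add: E_def R_def algebra_simps)
qed
lemma main_est1:
  fixes a b \<xi> \<nu> :: real and K K' r r' h h' h'' :: "real \<Rightarrow> real"
  assumes a0: "0 < a" and ab: "a \<le> b"
    and Kd: "\<And>t. t \<in> {a..b} \<Longrightarrow> (K has_real_derivative K' t) (at t within {a..b})"
    and Kpos: "\<And>t. t \<in> {a..b} \<Longrightarrow> 0 < K t"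
    and K'neg: "\<And>t. t \<in> {a..b} \<Longrightarrow> K' t \<le> 0"
    and K'c: "continuous_on {a..b} K'"
    and rd: "\<And>t. t \<in> {a..b} \<Longrightarrow> (r has_real_derivative r' t) (at t within {a..b})"
    and r'c: "continuous_on {a..b} r'"
    and hd: "\<And>t. t \<in> {a..b} \<Longrightarrow> (h has_real_derivative h' t) (at t within {a..b})"
    and h'd: "\<And>t. t \<in> {a..b} \<Longrightarrow> (h' has_real_derivative h'' t) (at t within {a..b})"
    and ode: "\<And>t. t \<in> {a..b} \<Longrightarrow> h'' t + (K t)\<^sup>2 * \<xi>\<^sup>2 * h t = r t"
    and h0: "h a = 0" and h'0: "h' a = 0"
    and nu: "\<nu> \<in> {a..b}" and xi: "\<xi> \<noteq> 0" and CC: "8 * exp (2 * b) * (1 + b) + 4 \<le> C"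
  shows "(h' \<nu>)\<^sup>2 + (K \<nu>)\<^sup>2 * \<xi>\<^sup>2 * (h \<nu>)\<^sup>2
           \<le> C * ( (r \<nu>)\<^sup>2 / ((K \<nu>)\<^sup>2 * \<xi>\<^sup>2)
               + integral {a..\<nu>} (\<lambda>\<tau>. (r \<tau>)\<^sup>2 / (K \<tau>)\<^sup>2) / \<xi>\<^sup>2
               + integral {a..\<nu>} (\<lambda>\<tau>. (r' \<tau>)\<^sup>2
                   / (\<bar>K \<tau> * K' \<tau>\<bar> + (K \<tau>)\<^sup>2)) / \<xi>\<^sup>2)"
proof -
  define S where "S = {a..b}"
  have hc: "continuous_on S h" unfolding S_def using hd by (rule DERIV_continuous_on)
  have h'c: "continuous_on S h'" unfolding S_def using h'd by (rule DERIV_continuous_on)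
  have rc: "continuous_on S r" unfolding S_def using rd by (rule DERIV_continuous_on)
  have Kc: "continuous_on S K" unfolding S_def using Kd by (rule DERIV_continuous_on)
  define E where "E t = (h' t)\<^sup>2 + (K t)\<^sup>2 * \<xi>\<^sup>2 * (h t)\<^sup>2" for t
  define E' where "E' t = 2 * h' t * r t + 2 * K t * K' t * \<xi>\<^sup>2 * (h t)\<^sup>2" for t
  have Ec: "continuous_on S E" unfolding E_def[abs_def] using hc h'c Kc by (intro continuous_intros)
  have Ed: "(E has_real_derivative E' t) (at t within S)" if t: "t \<in> S" for t
  proof -
    have o: "h'' t = r t - (K t)\<^sup>2 * \<xi>\<^sup>2 * h t" using ode[of t] t by (simp add: S_def algebra_simps)
    show ?thesis unfolding E_def[abs_def] E'_def
      using hd[of t] h'd[of t] Kd[of t] t unfolding S_def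
      by (auto intro!: derivative_eq_intros simp: o power2_eq_square algebra_simps)
  qed
  have Ea: "E a = 0" by (simp add: E_def h0 h'0)
  have nuS: "{a..\<nu>} \<subseteq> S" using nu by (auto simp: S_def)
  have nupos: "0 < \<nu>" using nu a0 by auto
  define X where "X = \<xi>\<^sup>2"
  have X: "0 < X" using xi by (simp add: X_def)
  define w where "w t = \<bar>K t * K' t\<bar> + (K t)\<^sup>2" for t
  have wpos: "0 < w t" if "t \<in> S" for t using Kpos[of t] that by (simp add: w_def S_def add_nonneg_pos)
  have wc: "continuous_on S w" unfolding w_def[abs_def] using Kc K'c unfolding S_def by (intro continuous_intros)
  define q2 where "q2 t = (r t)\<^sup>2 / (K t)\<^sup>2" for t
  define q3 where "q3 t = (r' t)\<^sup>2 / w t" for t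
  have q2c: "continuous_on S q2" unfolding q2_def[abs_def] using rc Kc Kpos
    apply (intro continuous_intros) apply (auto simp: S_def) by (metis less_irrefl)
  have q3c: "continuous_on S q3" unfolding q3_def[abs_def] using r'c wc wpos
    apply (intro continuous_intros) apply (auto simp: S_def) by (metis less_irrefl)
  have q2n: "0 \<le> q2 t" for t by (simp add: q2_def)
  have q3n: "0 \<le> q3 t" if "t \<in> S" for t using wpos[OF that] by (simp add: q3_def)
  have q2i: "q2 integrable_on {a..s}" if "s \<in> S" for s
    using that by (intro integrable_continuous_real continuous_on_subset[OF q2c]) (auto simp: S_def)
  have q3i: "q3 integrable_on {a..s}" if "s \<in> S" for s
    using that by (intro integrable_continuous_real continuous_on_subset[OF q3c]) (auto simp: S_def)
  have Ei: "E integrable_on {a..s}" if "s \<in> S" for s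
    using that by (intro integrable_continuous_real continuous_on_subset[OF Ec]) (auto simp: S_def)
  define I1 where "I1 t = (r t)\<^sup>2 / ((K t)\<^sup>2 * X)" for t
  define I2 where "I2 s = integral {a..s} q2 / X" for s
  define I3 where "I3 s = integral {a..s} q3 / X" for s
  define J where "J s = integral {a..s} E" for s
  have I1n: "0 \<le> I1 t" for t using X by (simp add: I1_def)
  have I3n: "0 \<le> I3 s" if "s \<in> S" for s
    unfolding I3_def using X q3i[OF that] q3n that by (intro divide_nonneg_pos integral_nonneg) (auto simp: S_def)
  have I2n: "0 \<le> I2 s" if "s \<in> S" for s
    unfolding I2_def using X q2i[OF that] q2n by (intro divide_nonneg_pos integral_nonneg) auto
  define G0 where "G0 t = E t - 2 * h t * r t" for t
  define G0' where "G0' t = 2 * K t * K' t * X * (h t)\<^sup>2 - 2 * h t * r' t" for t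
  have G0d: "(G0 has_real_derivative G0' t) (at t within S)" if t: "t \<in> S" for t
  proof -
    have "(G0 has_real_derivative (E' t - (2 * h' t * r t + 2 * h t * r' t))) (at t within S)"
      unfolding G0_def[abs_def] using Ed[OF t] hd[of t] rd[of t] t unfolding S_def
      by (auto intro!: derivative_eq_intros simp: algebra_simps)
    then show ?thesis by (simp add: E'_def G0'_def X_def algebra_simps)
  qed
  have stepA: "E s \<le> 2 * J s + 2 * I3 s + 4 * I1 s" if s: "s \<in> S" for s
  proof -
    have sS: "{a..s} \<subseteq> S" using s by (auto simp: S_def)
    have dd: "(G0 has_vector_derivative G0' x) (at x within {a..s})" if "x \<in> {a..s}" for x
      using DERIV_subset[OF G0d sS] that sS unfolding has_real_derivative_iff_has_vector_derivative by blast
    have "(G0' has_integral (G0 s - G0 a)) {a..s}"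
      using s by (intro fundamental_theorem_of_calculus dd) (auto simp: S_def)
    then have i1: "(G0' has_integral G0 s) {a..s}" by (simp add: G0_def Ea h0)
    have pw: "G0' t \<le> E t + q3 t / X" if t: "t \<in> {a..s}" for t
    proof -
      have tS: "t \<in> S" using t sS by auto
      have w0: "0 < w t" by (rule wpos[OF tS])
      have kk: "K t * K' t \<le> 0" using Kpos[of t] K'neg[of t] tS by (auto simp: S_def mult_nonneg_nonpos less_imp_le)
      have "0 \<le> (w t * X * h t + r' t)\<^sup>2 / (w t * X)" using w0 X by simp
      also have "\<dots> = w t * X * (h t)\<^sup>2 + 2 * h t * r' t + q3 t / X"
        using w0 X by (simp add: q3_def field_simps power2_eq_square)
      finally have A: "- 2 * h t * r' t \<le> w t * X * (h t)\<^sup>2 + q3 t / X" by simp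
      have "2 * K t * K' t * X * (h t)\<^sup>2 + w t * X * (h t)\<^sup>2 = ((K t)\<^sup>2 + K t * K' t) * (X * (h t)\<^sup>2)"
        using kk by (simp add: w_def algebra_simps)
      also have "\<dots> \<le> (K t)\<^sup>2 * (X * (h t)\<^sup>2)"
        using kk X by (intro mult_right_mono) auto
      also have "\<dots> \<le> E t" by (simp add: E_def X_def)
      finally show ?thesis using A by (simp add: G0'_def)
    qed
    have i2: "((\<lambda>t. E t + q3 t / X) has_integral (J s + I3 s)) {a..s}"
      unfolding J_def I3_def using Ei[OF s] q3i[OF s]
      by (intro has_integral_add has_integral_divide integrable_integral)
    have G: "G0 s \<le> J s + I3 s" using has_integral_le[OF i1 i2 pw] .
    have K0: "0 < K s" using Kpos s by (auto simp: S_def)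
    have "0 \<le> ((K s)\<^sup>2 * X * h s - 2 * r s)\<^sup>2 / (2 * (K s)\<^sup>2 * X)" using K0 X by simp
    also have "\<dots> = (K s)\<^sup>2 * X * (h s)\<^sup>2 / 2 - 2 * h s * r s + 2 * I1 s"
      using K0 X by (simp add: I1_def field_simps power2_eq_square)
    finally have B: "2 * h s * r s \<le> (K s)\<^sup>2 * X * (h s)\<^sup>2 / 2 + 2 * I1 s" by simp
    have "(K s)\<^sup>2 * X * (h s)\<^sup>2 \<le> E s" by (simp add: E_def X_def)
    then show ?thesis using G B by (simp add: G0_def)
  qed
  have nuS': "\<nu> \<in> S" using nu by (simp add: S_def)
  have gw: "J \<nu> \<le> exp (2 * (\<nu> - a)) * (4 * I2 \<nu> + 2 * I3 \<nu> * (\<nu> - a))"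
  proof (rule gronwall[where e = E and g = "\<lambda>s. 4 * I1 s + 2 * I3 \<nu>" and G = "\<lambda>s. 4 * I2 s + 2 * I3 \<nu> * (s - a)" and J = J])
    show "a \<le> \<nu>" "0 \<le> (2::real)" using nu by auto
    show "\<And>s. s \<in> {a..\<nu>} \<Longrightarrow> (J has_real_derivative E s) (at s within {a..\<nu>})"
      unfolding J_def[abs_def] has_real_derivative_iff_has_vector_derivative
      by (intro integral_has_vector_derivative continuous_on_subset[OF Ec nuS])
    show "J a = 0" by (simp add: J_def)
    show "\<And>s. s \<in> {a..\<nu>} \<Longrightarrow> ((\<lambda>s. 4 * I2 s + 2 * I3 \<nu> * (s - a)) has_real_derivative 4 * I1 s + 2 * I3 \<nu>) (at s within {a..\<nu>})"
    proof -
      fix s assume s: "s \<in> {a..\<nu>}"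
      have d: "((\<lambda>s. integral {a..s} q2) has_real_derivative q2 s) (at s within {a..\<nu>})"
        unfolding has_real_derivative_iff_has_vector_derivative
        using s by (intro integral_has_vector_derivative continuous_on_subset[OF q2c nuS])
      show "((\<lambda>s. 4 * I2 s + 2 * I3 \<nu> * (s - a)) has_real_derivative 4 * I1 s + 2 * I3 \<nu>) (at s within {a..\<nu>})"
        unfolding I2_def using d X by (auto intro!: derivative_eq_intros simp: I1_def q2_def)
    qed
    show "4 * I2 a + 2 * I3 \<nu> * (a - a) = 0" by (simp add: I2_def)
    show "\<And>s. s \<in> {a..\<nu>} \<Longrightarrow> 0 \<le> 4 * I1 s + 2 * I3 \<nu>" using I1n I3n[OF nuS'] by (simp add: add_nonneg_nonneg)
    show "E s \<le> 4 * I1 s + 2 * I3 \<nu> + 2 * J s" if s: "s \<in> {a..\<nu>}" for s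
    proof -
      have sS: "s \<in> S" using s nuS by auto
      have "integral {a..s} q3 \<le> integral {a..\<nu>} q3"
        using s q3i[OF sS] q3i[OF nuS'] q3n nu by (intro integral_subset_le) (auto simp: S_def)
      then have "I3 s \<le> I3 \<nu>" unfolding I3_def using X by (simp add: divide_right_mono)
      then show ?thesis using stepA[OF sS] by linarith
    qed
  qed
  have e1: "exp (2 * (\<nu> - a)) \<le> exp (2 * b)" using nu a0 by auto
  have e2: "1 \<le> exp (2 * b)" using nu a0 by auto
  have b0: "0 \<le> b" using nu a0 by auto
  have "4 * I2 \<nu> + 2 * I3 \<nu> * (\<nu> - a) \<le> 4 * I2 \<nu> + 2 * I3 \<nu> * b"
    using I3n[OF nuS'] nu a0 by (intro add_left_mono mult_left_mono) auto
  moreover have "0 \<le> 4 * I2 \<nu> + 2 * I3 \<nu> * (\<nu> - a)" using I2n[OF nuS'] I3n[OF nuS'] nu by auto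
  ultimately have "J \<nu> \<le> exp (2 * b) * (4 * I2 \<nu> + 2 * I3 \<nu> * b)"
    using gw e1 by (smt (verit) mult_mono exp_gt_zero)
  then have "E \<nu> \<le> 2 * (exp (2 * b) * (4 * I2 \<nu> + 2 * I3 \<nu> * b)) + 2 * I3 \<nu> + 4 * I1 \<nu>"
    using stepA[OF nuS'] by linarith
  also have "\<dots> \<le> (8 * exp (2 * b) * (1 + b) + 4) * (I1 \<nu> + I2 \<nu> + I3 \<nu>)"
  proof -
    let ?x = "exp (2 * b)"
    have x0: "0 < ?x" by simp
    have eq: "(8 * ?x * (1 + b) + 4) * (I1 \<nu> + I2 \<nu> + I3 \<nu>) - (2 * (?x * (4 * I2 \<nu> + 2 * I3 \<nu> * b)) + 2 * I3 \<nu> + 4 * I1 \<nu>)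
       = (8 * ?x * (1 + b)) * I1 \<nu> + (8 * ?x * b + 4) * I2 \<nu> + (8 * ?x + 4 * ?x * b + 2) * I3 \<nu>"
      by (simp add: algebra_simps)
    have "0 \<le> (8 * ?x * (1 + b)) * I1 \<nu>" using x0 b0 I1n[of \<nu>] by simp
    moreover have "0 \<le> (8 * ?x * b + 4) * I2 \<nu>" using x0 b0 I2n[OF nuS'] by simp
    moreover have "0 \<le> (8 * ?x + 4 * ?x * b + 2) * I3 \<nu>" using x0 b0 I3n[OF nuS'] by simp
    ultimately show ?thesis using eq by linarith
  qed
  also have "\<dots> \<le> C * (I1 \<nu> + I2 \<nu> + I3 \<nu>)"
    using CC I1n[of \<nu>] I2n[OF nuS'] I3n[OF nuS'] by (intro mult_right_mono) auto
  finally show ?thesis by (simp add: E_def I1_def I2_def I3_def q2_def[abs_def] q3_def[abs_def] w_def[abs_def] X_def)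
qed


theorem lemma4p7:
  fixes nu_star :: real
  assumes "0 < nu_star" and "nu_star < nu_cr"
  shows "\<exists>C>0. \<forall>\<epsilon> \<xi> (r::real \<Rightarrow> real) r' h h' h''.
     0 < \<epsilon> \<and> \<epsilon> < nu_star
     \<and> (\<forall>t\<in>{\<epsilon>..nu_star}. (r has_real_derivative r' t) (at t within {\<epsilon>..nu_star}))
     \<and> continuous_on {\<epsilon>..nu_star} r'
     \<and> (\<forall>t\<in>{\<epsilon>..nu_star}. (h has_real_derivative h' t) (at t within {\<epsilon>..nu_star}))
     \<and> (\<forall>t\<in>{\<epsilon>..nu_star}. (h' has_real_derivative h'' t) (at t within {\<epsilon>..nu_star}))
     \<and> continuous_on {\<epsilon>..nu_star} h''
     \<and> (\<forall>t\<in>{\<epsilon>..nu_star}. h'' t + (kp t)\<^sup>2 * \<xi>\<^sup>2 * h t = r t)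
     \<and> h \<epsilon> = 0 \<and> h' \<epsilon> = 0
     \<longrightarrow>
     (\<forall>\<nu>\<in>{\<epsilon>..nu_star}. \<xi> \<noteq> 0 \<longrightarrow>
        (h' \<nu>)\<^sup>2 + (kp \<nu>)\<^sup>2 * \<xi>\<^sup>2 * (h \<nu>)\<^sup>2
        \<le> C * ( (r \<nu>)\<^sup>2 / ((kp \<nu>)\<^sup>2 * \<xi>\<^sup>2)
               + integral {\<epsilon>..\<nu>} (\<lambda>\<tau>. (r \<tau>)\<^sup>2 / (kp \<tau>)\<^sup>2) / \<xi>\<^sup>2
               + integral {\<epsilon>..\<nu>} (\<lambda>\<tau>. (r' \<tau>)\<^sup>2
                   / (\<bar>kp \<tau> * kpp \<tau>\<bar> + (kp \<tau>)\<^sup>2)) / \<xi>\<^sup>2))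
     \<and> (\<forall>\<nu>\<in>{\<epsilon>..nu_star}.
        (h' \<nu>)\<^sup>2 + (kp \<nu>)\<^sup>2 * \<xi>\<^sup>2 * (h \<nu>)\<^sup>2
        \<le> C * \<nu> * integral {\<epsilon>..\<nu>} (\<lambda>\<tau>. (r \<tau>)\<^sup>2))"
proof -
  define C where "C = 8 * exp (2 * nu_star) * (1 + nu_star) + 4 + (exp 1 + 1)"
  have C1: "8 * exp (2 * nu_star) * (1 + nu_star) + 4 \<le> C" unfolding C_def
    using exp_gt_zero[of 1] by linarith
  have C2: "exp 1 + 1 \<le> C" unfolding C_def using assms(1)
    by (simp add: add_nonneg_nonneg)
  have Cpos: "0 < C" using C2 exp_gt_zero[of 1] by linarith
  show ?thesis
  proof (intro exI[of _ C] conjI Cpos allI impI)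
    fix \<epsilon> \<xi> and r r' h h' h'' :: "real \<Rightarrow> real"
    assume H: "0 < \<epsilon> \<and> \<epsilon> < nu_star
     \<and> (\<forall>t\<in>{\<epsilon>..nu_star}. (r has_real_derivative r' t) (at t within {\<epsilon>..nu_star}))
     \<and> continuous_on {\<epsilon>..nu_star} r'
     \<and> (\<forall>t\<in>{\<epsilon>..nu_star}. (h has_real_derivative h' t) (at t within {\<epsilon>..nu_star}))
     \<and> (\<forall>t\<in>{\<epsilon>..nu_star}. (h' has_real_derivative h'' t) (at t within {\<epsilon>..nu_star}))
     \<and> continuous_on {\<epsilon>..nu_star} h''
     \<and> (\<forall>t\<in>{\<epsilon>..nu_star}. h'' t + (kp t)\<^sup>2 * \<xi>\<^sup>2 * h t = r t)
     \<and> h \<epsilon> = 0 \<and> h' \<epsilon> = 0"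
    have rng: "0 < t \<and> t < nu_cr" if "t \<in> {\<epsilon>..nu_star}" for t
      using that H assms by auto
    have Kd: "(kp has_real_derivative kpp t) (at t within {\<epsilon>..nu_star})" if "t \<in> {\<epsilon>..nu_star}" for t
      using kp_der[of t] kpp_eq[of t] rng[OF that] by (auto intro: has_field_derivative_at_within)
    have Kpos: "0 < kp t" if "t \<in> {\<epsilon>..nu_star}" for t using kp_pos rng[OF that] by auto
    have K'neg: "kpp t \<le> 0" if "t \<in> {\<epsilon>..nu_star}" for t using kd_neg kpp_eq rng[OF that] by auto
    have "continuous_on {\<epsilon>..nu_star} kd"
      using kd_cont rng by (intro continuous_at_imp_continuous_on) auto
    moreover have "continuous_on {\<epsilon>..nu_star} kpp \<longleftrightarrow> continuous_on {\<epsilon>..nu_star} kd"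
      by (intro continuous_on_cong refl) (use kpp_eq rng in auto)
    ultimately have K'c: "continuous_on {\<epsilon>..nu_star} kpp" by simp
    have ab: "\<epsilon> \<le> nu_star" using H by auto
    show "\<forall>\<nu>\<in>{\<epsilon>..nu_star}. \<xi> \<noteq> 0 \<longrightarrow>
        (h' \<nu>)\<^sup>2 + (kp \<nu>)\<^sup>2 * \<xi>\<^sup>2 * (h \<nu>)\<^sup>2
        \<le> C * ( (r \<nu>)\<^sup>2 / ((kp \<nu>)\<^sup>2 * \<xi>\<^sup>2)
               + integral {\<epsilon>..\<nu>} (\<lambda>\<tau>. (r \<tau>)\<^sup>2 / (kp \<tau>)\<^sup>2) / \<xi>\<^sup>2
               + integral {\<epsilon>..\<nu>} (\<lambda>\<tau>. (r' \<tau>)\<^sup>2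
                   / (\<bar>kp \<tau> * kpp \<tau>\<bar> + (kp \<tau>)\<^sup>2)) / \<xi>\<^sup>2)"
      using H by (intro ballI impI main_est1[OF _ ab Kd Kpos K'neg K'c, where C = C]) (auto intro: C1)
    show "\<forall>\<nu>\<in>{\<epsilon>..nu_star}.
        (h' \<nu>)\<^sup>2 + (kp \<nu>)\<^sup>2 * \<xi>\<^sup>2 * (h \<nu>)\<^sup>2
        \<le> C * \<nu> * integral {\<epsilon>..\<nu>} (\<lambda>\<tau>. (r \<tau>)\<^sup>2)"
      using H by (intro ballI main_est[OF _ ab Kd Kpos K'neg K'c, where C = C]) (auto intro: C2)
  qed
qed

end
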